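(* If $(\lambda,\mu,\nu)$ is a low triple, then $\mathrm{ht}_0^+(\lambda+\mu-\nu)\le2$.
   Context: $\Phi$ is an irreducible reduced root system with basis $\alpha_1,\dots,\alpha_\ell$ numbered as in Bourbaki, fundamental weights $\omega_1,\dots,\omega_\ell$ dual to the simple coroots, weight lattice $\Lambda$, dominant weights $\Lambda^+$; $\mu\le\lambda$ iff $\lambda-\mu$ is a nonnegative integer combination of simple roots. A triple $(\lambda,\mu,\nu)$ of dominant weights is a low triple if (i) whenever $\lambda',\mu'\in\Lambda^+$ with $\lambda'\le\lambda$, $\mu'\le\mu$, $\nu\le\lambda'+\mu'$, then $\lambda'=\lambda$, $\mu'=\mu$; and (ii) $\nu+\sum_{i=1}^\ell\alpha_i\le\lambda+\mu$. Let $I_0\subset\{1,\dots,\ell\}$ be the largest connected set of nodes of the Dynkin diagram containing node $1$ whose subdiagram has only simple edges. For a weight $\lambda=\sum_i a_i\omega_i$ define $\mathrm{ht}_0^+(\lambda)=\sum_{i\in I_0,\,a_i>0}a_i$ if $\Phi$ is not of type $\mathsf F_4$, and, if $\Phi$ is of type $\mathsf F_4$, $\mathrm{ht}_0^+(\lambda)=\max\big(\sum_{i\in\{1,2\},a_i>0}a_i,\ \sum_{i\in\{3,4\},a_i>0}a_i\big)$. *)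

theory Defs
  imports Main "HOL-Library.Function_Algebras"
begin

text \<open>Irreducible reduced root systems, up to isomorphism, are classified by their
Cartan type.  We encode the type together with the Bourbaki numbering of the simple roots.\<close>

datatype cartan_type = TA nat | TB nat | TC nat | TD nat | TE nat | TF4 | TG2

definition valid_type :: "cartan_type \<Rightarrow> bool" where
  "valid_type X = (case X of
      TA n \<Rightarrow> n \<ge> 1 | TB n \<Rightarrow> n \<ge> 2 | TC n \<Rightarrow> n \<ge> 2 | TD n \<Rightarrow> n \<ge> 4
    | TE n \<Rightarrow> n \<in> {6,7,8} | TF4 \<Rightarrow> True | TG2 \<Rightarrow> True)"

definition rank :: "cartan_type \<Rightarrow> nat" where
  "rank X = (case X of
      TA n \<Rightarrow> n | TB n \<Rightarrow> n | TC n \<Rightarrow> n | TD n \<Rightarrow> n | TE n \<Rightarrow> n | TF4 \<Rightarrow> 4 | TG2 \<Rightarrow> 2)"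

definition nodes :: "cartan_type \<Rightarrow> nat set" where
  "nodes X = {1..rank X}"

definition dynkin_edge :: "cartan_type \<Rightarrow> nat \<Rightarrow> nat \<Rightarrow> bool" where
  "dynkin_edge X i j = (i \<in> nodes X \<and> j \<in> nodes X \<and> (case X of
      TA n \<Rightarrow> i + 1 = j \<or> j + 1 = i
    | TB n \<Rightarrow> i + 1 = j \<or> j + 1 = i
    | TC n \<Rightarrow> i + 1 = j \<or> j + 1 = i
    | TD n \<Rightarrow> ((i + 1 = j \<or> j + 1 = i) \<and> i \<le> n - 1 \<and> j \<le> n - 1)
              \<or> {i, j} = {n - 2, n}
    | TE n \<Rightarrow> {i, j} \<in> {{1,3},{3,4},{4,5},{5,6},{6,7},{7,8},{2,4}}
    | TF4 \<Rightarrow> i + 1 = j \<or> j + 1 = i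
    | TG2 \<Rightarrow> {i, j} = {1, 2}))"

text \<open>Cartan integers: cartan X i j is the pairing of alpha_j with the coroot of alpha_i, i.e. the
\<open>\<omega>_i\<close>-coordinate of the simple root \<open>\<alpha>_j\<close>.\<close>
definition cartan :: "cartan_type \<Rightarrow> nat \<Rightarrow> nat \<Rightarrow> int" where
  "cartan X i j =
    (if i \<in> nodes X \<and> j \<in> nodes X \<and> i = j then 2
     else if dynkin_edge X i j then
       (case X of
          TB n \<Rightarrow> (if i = n \<and> j = n - 1 then -2 else -1)
        | TC n \<Rightarrow> (if i = n - 1 \<and> j = n then -2 else -1)
        | TF4 \<Rightarrow> (if i = 3 \<and> j = 2 then -2 else -1)
        | TG2 \<Rightarrow> (if i = 1 \<and> j = 2 then -3 else -1)
        | _ \<Rightarrow> -1)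
     else 0)"

text \<open>Weights are written in the basis of fundamental weights: a weight is a function
\<open>nat \<Rightarrow> int\<close> supported on the nodes \<open>{1..\<ell>}\<close>.\<close>
definition weights :: "cartan_type \<Rightarrow> (nat \<Rightarrow> int) set" where
  "weights X = {f. \<forall>i. i \<notin> nodes X \<longrightarrow> f i = 0}"

definition dominant :: "cartan_type \<Rightarrow> (nat \<Rightarrow> int) set" where
  "dominant X = {f \<in> weights X. \<forall>i \<in> nodes X. f i \<ge> 0}"

definition simple_root :: "cartan_type \<Rightarrow> nat \<Rightarrow> nat \<Rightarrow> int" where
  "simple_root X j = (\<lambda>i. if i \<in> nodes X then cartan X i j else 0)"

definition sum_simple_roots :: "cartan_type \<Rightarrow> nat \<Rightarrow> int" where
  "sum_simple_roots X = (\<lambda>i. \<Sum>j\<in>nodes X. simple_root X j i)"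

definition wle :: "cartan_type \<Rightarrow> (nat \<Rightarrow> int) \<Rightarrow> (nat \<Rightarrow> int) \<Rightarrow> bool" where
  "wle X mu la = (\<exists>c :: nat \<Rightarrow> nat.
      la - mu = (\<lambda>i. \<Sum>j\<in>nodes X. int (c j) * simple_root X j i))"

definition low_triple :: "cartan_type \<Rightarrow> (nat \<Rightarrow> int) \<Rightarrow> (nat \<Rightarrow> int) \<Rightarrow> (nat \<Rightarrow> int) \<Rightarrow> bool" where
  "low_triple X la mu nu =
    (la \<in> dominant X \<and> mu \<in> dominant X \<and> nu \<in> dominant X \<and>
     (\<forall>la' \<in> dominant X. \<forall>mu' \<in> dominant X.
        wle X la' la \<and> wle X mu' mu \<and> wle X nu (la' + mu') \<longrightarrow> la' = la \<and> mu' = mu) \<and>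
     wle X (nu + sum_simple_roots X) (la + mu))"

definition simple_edge :: "cartan_type \<Rightarrow> nat \<Rightarrow> nat \<Rightarrow> bool" where
  "simple_edge X i j = (dynkin_edge X i j \<and> cartan X i j * cartan X j i = 1)"

text \<open>\<open>I_0\<close>: the nodes reachable from node 1 via simple edges. Since Dynkin diagrams
are trees, this is the largest connected set of nodes containing 1 whose subdiagram has
only simple edges.\<close>
definition I0 :: "cartan_type \<Rightarrow> nat set" where
  "I0 X = {i \<in> nodes X. (1, i) \<in> {(a, b). simple_edge X a b}\<^sup>*}"

definition ht0plus :: "cartan_type \<Rightarrow> (nat \<Rightarrow> int) \<Rightarrow> int" where
  "ht0plus X f =
    (if X = TF4 then
       max (\<Sum>i\<in>{i \<in> {1,2}. f i > 0}. f i) (\<Sum>i\<in>{i \<in> {3,4}. f i > 0}. f i)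
     else (\<Sum>i\<in>{i \<in> I0 X. f i > 0}. f i))"

end

theory Submission
  imports Defs
begin

abbreviation RR :: "cartan_type \<Rightarrow> (nat \<times> nat) set" where
  "RR X \<equiv> {(a, b). simple_edge X a b}"

lemma dyn_sym: "dynkin_edge X a b = dynkin_edge X b a"
  unfolding dynkin_edge_def by (cases X) (auto simp: insert_commute)

lemma dyn_nodes: "dynkin_edge X a b \<Longrightarrow> a \<in> nodes X \<and> b \<in> nodes X"
  unfolding dynkin_edge_def by auto

lemma cartan_off: "a \<noteq> b \<Longrightarrow> cartan X a b \<le> 0"
  unfolding cartan_def by (cases X) auto

lemma cartan_nonedge: "a \<noteq> b \<Longrightarrow> \<not> dynkin_edge X a b \<Longrightarrow> cartan X a b = 0"
  unfolding cartan_def by auto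

lemma cartan_diag: "a \<in> nodes X \<Longrightarrow> cartan X a a = 2"
  unfolding cartan_def by auto

lemma se_sym: "simple_edge X a b = simple_edge X b a"
  unfolding simple_edge_def using dyn_sym by (metis mult.commute)

lemma se_neq: "simple_edge X a b \<Longrightarrow> a \<noteq> b"
  unfolding simple_edge_def using dyn_nodes cartan_diag by fastforce

lemma se_cartan: "simple_edge X a b \<Longrightarrow> cartan X a b = -1"
proof -
  assume h: "simple_edge X a b"
  then have "a \<noteq> b" by (rule se_neq)
  then have "cartan X a b \<le> 0" "cartan X b a \<le> 0" using cartan_off by auto
  moreover have "cartan X a b * cartan X b a = 1" using h simple_edge_def by auto
  ultimately show ?thesis using zmult_eq_1_iff by fastforce
qed

lemma se_dyn: "simple_edge X a b \<Longrightarrow> dynkin_edge X a b"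
  unfolding simple_edge_def by auto

lemma se_nodes: "simple_edge X a b \<Longrightarrow> a \<in> nodes X \<and> b \<in> nodes X"
  using se_dyn dyn_nodes by blast

lemma RR_sym: "(a, b) \<in> (RR X)\<^sup>* \<Longrightarrow> (b, a) \<in> (RR X)\<^sup>*"
proof -
  have "sym (RR X)" unfolding sym_def using se_sym by blast
  then have "sym ((RR X)\<^sup>*)" by (rule sym_rtrancl)
  then show "(a, b) \<in> (RR X)\<^sup>* \<Longrightarrow> (b, a) \<in> (RR X)\<^sup>*" unfolding sym_def by blast
qed

lemma closed_set:
  assumes "\<And>x y. x \<in> T \<Longrightarrow> simple_edge X x y \<Longrightarrow> y \<in> T"
    and "(a, b) \<in> (RR X)\<^sup>*" and "a \<in> T"
  shows "b \<in> T"
  using assms(2,3)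
proof (induction rule: rtrancl_induct)
  case base then show ?case .
next
  case (step y z) then show ?case using assms(1) by auto
qed

lemma dyn_irrefl: "\<not> dynkin_edge X a a"
  unfolding dynkin_edge_def nodes_def by (cases X) (auto simp: doubleton_eq_iff)

lemma cartan_edge: "dynkin_edge X a b \<Longrightarrow> cartan X a b =
       (case X of
          TB n \<Rightarrow> (if a = n \<and> b = n - 1 then -2 else -1)
        | TC n \<Rightarrow> (if a = n - 1 \<and> b = n then -2 else -1)
        | TF4 \<Rightarrow> (if a = 3 \<and> b = 2 then -2 else -1)
        | TG2 \<Rightarrow> (if a = 1 \<and> b = 2 then -3 else -1)
        | _ \<Rightarrow> -1)"
  unfolding cartan_def using dyn_irrefl by (metis)

lemma A_simple: "dynkin_edge (TA n) a b \<Longrightarrow> simple_edge (TA n) a b"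
  unfolding simple_edge_def using cartan_edge dyn_sym by fastforce

lemma D_simple: "dynkin_edge (TD n) a b \<Longrightarrow> simple_edge (TD n) a b"
  unfolding simple_edge_def using cartan_edge dyn_sym by fastforce

lemma E_simple: "dynkin_edge (TE n) a b \<Longrightarrow> simple_edge (TE n) a b"
  unfolding simple_edge_def using cartan_edge dyn_sym by fastforce

lemma G_iso: "\<not> simple_edge TG2 a b"
proof
  assume h: "simple_edge TG2 a b"
  then have e: "dynkin_edge TG2 a b" "dynkin_edge TG2 b a" using se_dyn se_sym by metis+
  then have "{a,b} = {1,2}" unfolding dynkin_edge_def by simp
  then have "(a = 1 \<and> b = 2) \<or> (a = 2 \<and> b = 1)" by (auto simp: doubleton_eq_iff)
  then show False using h e cartan_edge[OF e(1)] cartan_edge[OF e(2)] unfolding simple_edge_def by auto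
qed

lemma B_iso: "\<not> simple_edge (TB n) n p"
proof
  assume h: "simple_edge (TB n) n p"
  then have e: "dynkin_edge (TB n) n p" "dynkin_edge (TB n) p n" using se_dyn se_sym by metis+
  then have "p = n - 1" unfolding dynkin_edge_def nodes_def rank_def by auto
  moreover have "n \<ge> 1" using e dyn_nodes unfolding nodes_def rank_def by auto
  ultimately show False using h e cartan_edge[OF e(1)] cartan_edge[OF e(2)] unfolding simple_edge_def by (auto split: if_splits)
qed

lemma C_iso: "\<not> simple_edge (TC n) n p"
proof
  assume h: "simple_edge (TC n) n p"
  then have e: "dynkin_edge (TC n) n p" "dynkin_edge (TC n) p n" using se_dyn se_sym by metis+
  then have "p = n - 1" unfolding dynkin_edge_def nodes_def rank_def by auto
  moreover have "n \<ge> 1" using e dyn_nodes unfolding nodes_def rank_def by auto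
  ultimately show False using h e cartan_edge[OF e(1)] cartan_edge[OF e(2)] unfolding simple_edge_def by (auto split: if_splits)
qed

lemma B_simple: "dynkin_edge (TB n) a b \<Longrightarrow> a \<noteq> n \<Longrightarrow> b \<noteq> n \<Longrightarrow> simple_edge (TB n) a b"
  unfolding simple_edge_def using cartan_edge dyn_sym by fastforce

lemma C_simple: "dynkin_edge (TC n) a b \<Longrightarrow> a \<noteq> n \<Longrightarrow> b \<noteq> n \<Longrightarrow> simple_edge (TC n) a b"
  unfolding simple_edge_def using cartan_edge dyn_sym by fastforce

lemma F_closed: "x \<in> {1,2} \<Longrightarrow> simple_edge TF4 x y \<Longrightarrow> y \<in> {1,2::nat}"
proof -
  assume x: "x \<in> {1,2}" and h: "simple_edge TF4 x y"
  then have e: "dynkin_edge TF4 x y" "dynkin_edge TF4 y x" using se_dyn se_sym by metis+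
  then have "y = x + 1 \<or> x = y + 1" unfolding dynkin_edge_def by auto
  moreover have "y \<ge> 1" using e dyn_nodes unfolding nodes_def rank_def by auto
  ultimately show ?thesis using x h e cartan_edge[OF e(1)] cartan_edge[OF e(2)] unfolding simple_edge_def by auto
qed

lemma F_simple: "dynkin_edge TF4 a b \<Longrightarrow> {a,b} \<noteq> {2,3} \<Longrightarrow> simple_edge TF4 a b"
  unfolding simple_edge_def using cartan_edge dyn_sym by fastforce

lemma F_12: "simple_edge TF4 1 2" and F_34: "simple_edge TF4 3 4"
  unfolding simple_edge_def cartan_def dynkin_edge_def nodes_def rank_def by auto
lemma iso_reach:
  assumes "\<And>p. \<not> simple_edge X x p" "(x, b) \<in> (RR X)\<^sup>*" shows "b = x"
  using closed_set[of "{x}" X x b] assms by auto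

lemma conn_simple:
  assumes "dynkin_edge X a b" "(a, b) \<in> (RR X)\<^sup>*"
  shows "simple_edge X a b"
proof (cases X)
  case (TA n) then show ?thesis using A_simple assms by simp
next
  case (TD n) then show ?thesis using D_simple assms by simp
next
  case (TE n) then show ?thesis using E_simple assms by simp
next
  case (TB n)
  show ?thesis
  proof (cases "a = n \<or> b = n")
    case True
    then show ?thesis
    proof
      assume "a = n" then have "b = a" using iso_reach[of X n b] B_iso assms(2) TB by auto
      then show ?thesis using dyn_irrefl assms(1) by auto
    next
      assume "b = n" then have "a = b" using iso_reach[of X n a] B_iso RR_sym[OF assms(2)] TB by auto
      then show ?thesis using dyn_irrefl assms(1) by auto
    qed
  next
    case False then show ?thesis using B_simple assms TB by auto
  qed
next
  case (TC n)
  show ?thesis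
  proof (cases "a = n \<or> b = n")
    case True
    then show ?thesis
    proof
      assume "a = n" then have "b = a" using iso_reach[of X n b] C_iso assms(2) TC by auto
      then show ?thesis using dyn_irrefl assms(1) by auto
    next
      assume "b = n" then have "a = b" using iso_reach[of X n a] C_iso RR_sym[OF assms(2)] TC by auto
      then show ?thesis using dyn_irrefl assms(1) by auto
    qed
  next
    case False then show ?thesis using C_simple assms TC by auto
  qed
next
  case TG2
  then have "b = a" using iso_reach[of X a b] G_iso assms(2) by auto
  then show ?thesis using dyn_irrefl assms(1) by auto
next
  case TF4
  show ?thesis
  proof (cases "{a,b} = {2,3}")
    case True
    then have "(a = 2 \<and> b = 3) \<or> (a = 3 \<and> b = 2)" by (auto simp: doubleton_eq_iff)
    then have "(2, 3) \<in> (RR X)\<^sup>*" using assms(2) RR_sym by auto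
    then have "(3::nat) \<in> {1,2}" using closed_set[of "{1,2}" X 2 3] F_closed TF4 by auto
    then show ?thesis by simp
  next
    case False then show ?thesis using F_simple assms TF4 by auto
  qed
qed

lemma conn_cartan:
  assumes "(q, p) \<in> (RR X)\<^sup>*" "q \<noteq> p"
  shows "cartan X q p = (if simple_edge X q p then -1 else 0)"
proof (cases "dynkin_edge X q p")
  case True
  then have "simple_edge X q p" using conn_simple assms by blast
  then show ?thesis using se_cartan by simp
next
  case False
  then show ?thesis using cartan_nonedge assms se_dyn by auto
qed
lemma walk_exists:
  assumes "(i, j) \<in> (RR X)\<^sup>*"
  shows "\<exists>xs. xs \<noteq> [] \<and> hd xs = i \<and> last xs = j \<and> successively (simple_edge X) xs"
  using assms
proof (induction rule: rtrancl_induct)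
  case base
  then show ?case by (intro exI[of _ "[i]"]) simp
next
  case (step y z)
  then obtain xs where xs: "xs \<noteq> []" "hd xs = i" "last xs = y" "successively (simple_edge X) xs" by blast
  have "successively (simple_edge X) (xs @ [z])" using xs step(2) by (simp add: successively_append_iff)
  moreover have "hd (xs @ [z]) = i" using xs by simp
  ultimately show ?case by (intro exI[of _ "xs @ [z]"]) simp
qed

lemma walk_reach:
  "successively (simple_edge X) xs \<Longrightarrow> xs \<noteq> [] \<Longrightarrow> p \<in> set xs \<Longrightarrow> (hd xs, p) \<in> (RR X)\<^sup>*"
proof (induction xs)
  case Nil then show ?case by simp
next
  case (Cons x ys)
  show ?case
  proof (cases "ys = [] \<or> p = x")
    case True then show ?thesis using Cons by auto
  next
    case False
    then have "simple_edge X x (hd ys)" "successively (simple_edge X) ys" "p \<in> set ys"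
      using Cons.prems by (auto simp: successively_Cons)
    then have "(hd ys, p) \<in> (RR X)\<^sup>*" using Cons.IH False by blast
    then show ?thesis using \<open>simple_edge X x (hd ys)\<close> by (auto intro: converse_rtrancl_into_rtrancl)
  qed
qed

definition isw :: "cartan_type \<Rightarrow> nat \<Rightarrow> nat \<Rightarrow> nat list \<Rightarrow> bool" where
  "isw X i j xs = (xs \<noteq> [] \<and> hd xs = i \<and> last xs = j \<and> successively (simple_edge X) xs)"

lemma minwalk_distinct:
  assumes w: "isw X i j xs" and m: "\<forall>ys. isw X i j ys \<longrightarrow> length xs \<le> length ys"
  shows "distinct xs"
proof (rule ccontr)
  assume "\<not> distinct xs"
  then obtain us vs ws y where d: "xs = us @ [y] @ vs @ [y] @ ws" using not_distinct_decomp by blast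
  let ?A = "us @ [y]"
  let ?ys = "?A @ ws"
  have xs2: "xs = ?A @ ((vs @ [y]) @ ws)" using d by simp
  have s: "successively (simple_edge X) (?A @ ((vs @ [y]) @ ws))" using w xs2 unfolding isw_def by simp
  then have s1: "successively (simple_edge X) ?A" and s2: "successively (simple_edge X) ((vs @ [y]) @ ws)"
    by (simp_all only: successively_append_iff)
  from s2 have s3: "successively (simple_edge X) ws" "ws = [] \<or> simple_edge X y (hd ws)"
    by (simp_all only: successively_append_iff) (auto)
  have "successively (simple_edge X) ?ys" using s1 s3
    by (subst successively_append_iff) auto
  moreover have "hd ?ys = i" using w xs2 unfolding isw_def by (cases us) auto
  moreover have "last ?ys = j" using w xs2 unfolding isw_def by (cases ws) auto
  ultimately have "isw X i j ?ys" unfolding isw_def by simp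
  moreover have "length ?ys < length xs" using d by simp
  ultimately show False using m by force
qed

lemma minwalk_first:
  assumes w: "isw X i j xs" and m: "\<forall>ys. isw X i j ys \<longrightarrow> length xs \<le> length ys"
    and p: "p \<in> set xs" "simple_edge X i p"
  shows "p = hd (tl xs)"
proof -
  obtain ys where xs: "xs = i # ys" using w unfolding isw_def by (cases xs) auto
  have "p \<noteq> i" using se_neq p(2) by blast
  then have "p \<in> set ys" using p xs by simp
  then obtain as bs where ys: "ys = as @ p # bs" by (meson split_list)
  show ?thesis
  proof (cases as)
    case Nil then show ?thesis using xs ys by simp
  next
    case (Cons a as')
    let ?zs = "i # p # bs"
    have "isw X i j ?zs" using w p(2) unfolding isw_def xs ys
      by (auto simp: successively_append_iff successively_Cons)
    moreover have "length ?zs < length xs" using xs ys Cons by simp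
    ultimately show ?thesis using m by force
  qed
qed

lemma walk_interior:
  assumes w: "isw X i j xs" and d: "distinct xs" and q: "q \<in> set xs" "q \<noteq> i" "q \<noteq> j"
  shows "\<exists>a b. a \<noteq> b \<and> a \<in> set xs \<and> b \<in> set xs \<and> simple_edge X q a \<and> simple_edge X q b"
proof -
  obtain us vs where xs: "xs = us @ q # vs" using q(1) by (meson split_list)
  have "us \<noteq> []" using w q xs unfolding isw_def by auto
  moreover have "vs \<noteq> []" using w q xs unfolding isw_def by auto
  ultimately have e: "simple_edge X (last us) q" "simple_edge X q (hd vs)"
    using w xs unfolding isw_def by (auto simp: successively_append_iff successively_Cons)
  have "last us \<in> set us" "hd vs \<in> set vs" using \<open>us \<noteq> []\<close> \<open>vs \<noteq> []\<close> by auto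
  then have "last us \<noteq> hd vs" using d xs by auto
  then show ?thesis using e se_sym xs \<open>us \<noteq> []\<close> \<open>vs \<noteq> []\<close>
    by (intro exI[of _ "last us"] exI[of _ "hd vs"]) auto
qed

lemma walk_last:
  assumes w: "isw X i j xs" and "i \<noteq> j"
  shows "\<exists>a. a \<in> set xs \<and> simple_edge X j a"
proof -
  obtain us where xs: "xs = us @ [j]" using w unfolding isw_def by (metis append_butlast_last_id)
  have "us \<noteq> []" using w xs assms(2) unfolding isw_def by auto
  then have "simple_edge X (last us) j" using w xs unfolding isw_def by (auto simp: successively_append_iff)
  then show ?thesis using se_sym xs \<open>us \<noteq> []\<close> by (intro exI[of _ "last us"]) auto
qed

lemma walk_first:
  assumes w: "isw X i j xs" and "i \<noteq> j"
  shows "hd (tl xs) \<in> set xs \<and> simple_edge X i (hd (tl xs))"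
proof -
  obtain ys where xs: "xs = i # ys" using w unfolding isw_def by (cases xs) auto
  have "ys \<noteq> []" using w xs assms(2) unfolding isw_def by auto
  then show ?thesis using w xs unfolding isw_def by (auto simp: successively_Cons)
qed
definition lowr :: "cartan_type \<Rightarrow> (nat \<Rightarrow> nat) \<Rightarrow> nat \<Rightarrow> int" where
  "lowr X b = (\<lambda>i. \<Sum>j\<in>nodes X. int (b j) * simple_root X j i)"

lemma finite_nodes: "finite (nodes X)"
  unfolding nodes_def by simp

lemma lowr_set:
  assumes "S \<subseteq> nodes X"
  shows "lowr X (\<lambda>p. if p \<in> S then 1 else 0) q = (if q \<in> nodes X then (\<Sum>p\<in>S. cartan X q p) else 0)"
proof -
  have "lowr X (\<lambda>p. if p \<in> S then 1 else 0) q = (\<Sum>p\<in>nodes X. if p \<in> S then simple_root X p q else 0)"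
    unfolding lowr_def by (intro sum.cong) auto
  also have "\<dots> = (\<Sum>p\<in>S. simple_root X p q)"
    using assms finite_nodes by (simp add: sum.If_cases Int_absorb1)
  also have "\<dots> = (if q \<in> nodes X then (\<Sum>p\<in>S. cartan X q p) else 0)"
    unfolding simple_root_def by simp
  finally show ?thesis .
qed

lemma val_in:
  assumes "finite S" "q \<in> S" "q \<in> nodes X" "\<forall>p\<in>S. (q, p) \<in> (RR X)\<^sup>*"
  shows "(\<Sum>p\<in>S. cartan X q p) = 2 - int (card {p\<in>S. simple_edge X q p})"
proof -
  have "(\<Sum>p\<in>S. cartan X q p) = cartan X q q + (\<Sum>p\<in>S - {q}. cartan X q p)"
    using assms by (simp add: sum.remove)
  also have "(\<Sum>p\<in>S - {q}. cartan X q p) = (\<Sum>p\<in>S - {q}. if simple_edge X q p then -1 else 0)"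
    using assms conn_cartan by (intro sum.cong) auto
  also have "\<dots> = - int (card {p\<in>S - {q}. simple_edge X q p})"
    using assms by (simp add: sum.If_cases Int_def)
  also have "{p\<in>S - {q}. simple_edge X q p} = {p\<in>S. simple_edge X q p}"
    using se_neq by blast
  finally show ?thesis using cartan_diag assms by simp
qed

lemma val_out:
  assumes "q \<notin> S"
  shows "(\<Sum>p\<in>S. cartan X q p) \<le> 0"
  using assms by (intro sum_nonpos cartan_off) auto

lemma walk_contra:
  fixes la :: "nat \<Rightarrow> int"
  assumes dom: "la \<in> dominant X"
    and P: "\<forall>b::nat\<Rightarrow>nat. (\<forall>j. b j \<le> 1) \<longrightarrow> la - lowr X b \<in> dominant X \<longrightarrow> lowr X b = 0"
    and r: "(i, j) \<in> (RR X)\<^sup>*" and ij: "i \<noteq> j" and li: "la i \<ge> 1" and lj: "la j \<ge> 1"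
  shows False
proof -
  obtain xs0 where "isw X i j xs0" using walk_exists[OF r] unfolding isw_def by blast
  then obtain xs where w: "isw X i j xs" and m: "\<forall>ys. isw X i j ys \<longrightarrow> length xs \<le> length ys"
    using ex_has_least_nat[of "isw X i j" xs0 length] by blast
  have d: "distinct xs" using minwalk_distinct[OF w m] .
  define S where "S = set xs"
  have fS: "finite S" unfolding S_def by simp
  have wt: "\<forall>q. q \<notin> nodes X \<longrightarrow> la q = 0" using dom unfolding dominant_def weights_def by auto
  have inode: "i \<in> nodes X" using wt li by force
  have reach: "\<forall>p\<in>S. (i, p) \<in> (RR X)\<^sup>*"
    using walk_reach w unfolding isw_def S_def by metis
  have Sn: "S \<subseteq> nodes X"
  proof
    fix p assume "p \<in> S"
    then have "(i, p) \<in> (RR X)\<^sup>*" using reach by blast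
    then show "p \<in> nodes X"
    proof (cases rule: rtranclE)
      case base then show ?thesis using inode by simp
    next
      case (step y) then show ?thesis using se_nodes by auto
    qed
  qed
  have conn: "\<forall>q\<in>S. \<forall>p\<in>S. (q, p) \<in> (RR X)\<^sup>*"
    using reach RR_sym by (meson rtrancl_trans)
  define b where "b = (\<lambda>p::nat. if p \<in> S then 1 else (0::nat))"
  have lb: "lowr X b q = (if q \<in> nodes X then (\<Sum>p\<in>S. cartan X q p) else 0)" for q
    unfolding b_def using lowr_set[OF Sn] by simp
  have iS: "i \<in> S" and jS: "j \<in> S" using w unfolding isw_def S_def by auto
  have ci: "{p\<in>S. simple_edge X i p} = {hd (tl xs)}"
    using walk_first[OF w ij] minwalk_first[OF w m] unfolding S_def by blast
  have vi: "lowr X b i = 1"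
    using lb val_in[OF fS iS inode] conn iS inode ci by simp
  have vj: "lowr X b j \<le> 1"
  proof (cases "j \<in> nodes X")
    case True
    obtain a where "a \<in> S" "simple_edge X j a" using walk_last[OF w ij] unfolding S_def by blast
    then have "card {p\<in>S. simple_edge X j p} \<ge> 1" using fS
      by (metis (no_types, lifting) One_nat_def Suc_leI card_gt_0_iff empty_iff finite_subset mem_Collect_eq subsetI)
    then show ?thesis using lb val_in[OF fS jS True] conn jS True by simp
  qed (simp add: lb)
  have vint: "lowr X b q \<le> 0" if "q \<in> S" "q \<noteq> i" "q \<noteq> j" for q
  proof (cases "q \<in> nodes X")
    case True
    have qx: "q \<in> set xs" using that(1) unfolding S_def .
    from walk_interior[OF w d qx that(2) that(3)] obtain a c where
      ac: "a \<noteq> c" "a \<in> set xs" "c \<in> set xs" "simple_edge X q a" "simple_edge X q c"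
      by blast
    have "{a, c} \<subseteq> {p\<in>S. simple_edge X q p}" using ac unfolding S_def by blast
    then have "card {a, c} \<le> card {p\<in>S. simple_edge X q p}" using fS by (intro card_mono) auto
    then have "card {p\<in>S. simple_edge X q p} \<ge> 2" using ac by simp
    then show ?thesis using lb val_in[OF fS that(1) True] conn that True by simp
  qed (simp add: lb)
  have vout: "lowr X b q \<le> 0" if "q \<notin> S" for q
    using lb val_out[OF that] by simp
  have "la - lowr X b \<in> dominant X"
    unfolding dominant_def weights_def
  proof (intro CollectI conjI allI ballI impI)
    fix q assume "q \<notin> nodes X" then show "(la - lowr X b) q = 0" using wt lb by simp
  next
    fix q assume q: "q \<in> nodes X"
    have "la q \<ge> 0" using dom q unfolding dominant_def by auto
    then show "(la - lowr X b) q \<ge> 0"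
      using vi vj vint vout li lj by (cases "q \<in> S"; cases "q = i"; cases "q = j") force+
  qed
  moreover have "\<forall>j. b j \<le> 1" unfolding b_def by simp
  ultimately have "lowr X b = 0" using P by blast
  then show False using vi by simp
qed
lemma single_bound:
  fixes la :: "nat \<Rightarrow> int"
  assumes dom: "la \<in> dominant X"
    and P: "\<forall>b::nat\<Rightarrow>nat. (\<forall>j. b j \<le> 1) \<longrightarrow> la - lowr X b \<in> dominant X \<longrightarrow> lowr X b = 0"
    and q: "q \<in> nodes X"
  shows "la q \<le> 1"
proof (rule ccontr)
  assume "\<not> la q \<le> 1"
  then have lq: "la q \<ge> 2" by simp
  define b where "b = (\<lambda>p::nat. if p \<in> {q} then 1 else (0::nat))"
  have lb: "lowr X b r = (if r \<in> nodes X then cartan X r q else 0)" for r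
    unfolding b_def using lowr_set[of "{q}" X r] q by simp
  have wt: "\<forall>r. r \<notin> nodes X \<longrightarrow> la r = 0" using dom unfolding dominant_def weights_def by auto
  have "la - lowr X b \<in> dominant X"
    unfolding dominant_def weights_def
  proof (intro CollectI conjI allI ballI impI)
    fix r assume "r \<notin> nodes X" then show "(la - lowr X b) r = 0" using wt lb by simp
  next
    fix r assume r: "r \<in> nodes X"
    have "la r \<ge> 0" using dom r unfolding dominant_def by auto
    moreover have "r \<noteq> q \<Longrightarrow> cartan X r q \<le> 0" using cartan_off by blast
    ultimately show "(la - lowr X b) r \<ge> 0"
      using lb r lq cartan_diag[OF q] by (cases "r = q") auto
  qed
  moreover have "\<forall>j. b j \<le> 1" unfolding b_def by simp
  ultimately have "lowr X b = 0" using P by blast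
  then have "lowr X b q = 0" by simp
  then show False using lb q cartan_diag[OF q] by simp
qed

lemma sum_le_one:
  fixes f :: "nat \<Rightarrow> int"
  assumes "finite A" "\<forall>i\<in>A. 0 \<le> f i \<and> f i \<le> 1"
    and "\<forall>i\<in>A. \<forall>j\<in>A. i \<noteq> j \<longrightarrow> \<not> (f i \<ge> 1 \<and> f j \<ge> 1)"
  shows "sum f A \<le> 1"
proof (cases "\<exists>i\<in>A. f i \<ge> 1")
  case True
  then obtain i where i: "i \<in> A" "f i \<ge> 1" by blast
  have "sum f (A - {i}) = 0"
  proof (rule sum.neutral, rule ballI)
    fix j assume "j \<in> A - {i}"
    then show "f j = 0" using assms(2,3) i by force
  qed
  then show ?thesis using sum.remove[OF assms(1) i(1), of f] assms(2) i by simp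
next
  case False
  then have "\<forall>i\<in>A. f i = 0" using assms(2) by force
  then show ?thesis by simp
qed

lemma wle_lower:
  assumes eq: "la + mu - (nu + sum_simple_roots X) = (\<lambda>i. \<Sum>j\<in>nodes X. int (c j) * simple_root X j i)"
    and hb: "\<forall>j. b j \<le> 1"
  shows "wle X nu (la + mu - lowr X b)"
  unfolding wle_def
proof (intro exI[of _ "\<lambda>j. c j + 1 - b j"] ext)
  fix i
  have e: "la i + mu i - (nu i + sum_simple_roots X i) = (\<Sum>j\<in>nodes X. int (c j) * simple_root X j i)"
    using fun_cong[OF eq, of i] by simp
  have "(\<Sum>j\<in>nodes X. int (c j + 1 - b j) * simple_root X j i)
      = (\<Sum>j\<in>nodes X. int (c j) * simple_root X j i + simple_root X j i - int (b j) * simple_root X j i)"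
  proof (intro sum.cong refl)
    fix j
    have "int (c j + 1 - b j) = int (c j) + 1 - int (b j)" using hb[rule_format, of j] by simp
    then show "int (c j + 1 - b j) * simple_root X j i = int (c j) * simple_root X j i + simple_root X j i - int (b j) * simple_root X j i"
      by (simp add: algebra_simps)
  qed
  also have "\<dots> = (\<Sum>j\<in>nodes X. int (c j) * simple_root X j i) + sum_simple_roots X i - lowr X b i"
    unfolding sum_simple_roots_def lowr_def by (simp add: sum.distrib sum_subtractf)
  finally show "(la + mu - lowr X b - nu) i = (\<Sum>j\<in>nodes X. int (c j + 1 - b j) * simple_root X j i)"
    using e by simp
qed

lemma wle_refl: "wle X f f"
  unfolding wle_def by (intro exI[of _ "\<lambda>_. 0"]) (simp add: fun_eq_iff)

lemma wle_sub: "wle X (f - lowr X b) f"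
  unfolding wle_def lowr_def by (intro exI[of _ b]) (simp add: fun_eq_iff)

lemma low_P:
  assumes lt: "low_triple X la mu nu"
  shows "\<forall>b::nat\<Rightarrow>nat. (\<forall>j. b j \<le> 1) \<longrightarrow> la - lowr X b \<in> dominant X \<longrightarrow> lowr X b = 0"
    and "\<forall>b::nat\<Rightarrow>nat. (\<forall>j. b j \<le> 1) \<longrightarrow> mu - lowr X b \<in> dominant X \<longrightarrow> lowr X b = 0"
proof -
  from lt have dl: "la \<in> dominant X" and dm: "mu \<in> dominant X"
    and mn: "\<forall>la' \<in> dominant X. \<forall>mu' \<in> dominant X.
        wle X la' la \<and> wle X mu' mu \<and> wle X nu (la' + mu') \<longrightarrow> la' = la \<and> mu' = mu"
    and w2: "wle X (nu + sum_simple_roots X) (la + mu)"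
    unfolding low_triple_def by auto
  from w2 obtain c where eq: "la + mu - (nu + sum_simple_roots X) = (\<lambda>i. \<Sum>j\<in>nodes X. int (c j) * simple_root X j i)"
    unfolding wle_def by blast
  show "\<forall>b::nat\<Rightarrow>nat. (\<forall>j. b j \<le> 1) \<longrightarrow> la - lowr X b \<in> dominant X \<longrightarrow> lowr X b = 0"
  proof (intro allI impI)
    fix b :: "nat \<Rightarrow> nat" assume hb: "\<forall>j. b j \<le> 1" and hd: "la - lowr X b \<in> dominant X"
    have "wle X nu ((la - lowr X b) + mu)" using wle_lower[OF eq hb] by (simp add: algebra_simps)
    then have "la - lowr X b = la" using mn hd dm wle_sub wle_refl by blast
    then show "lowr X b = 0" by simp
  qed
  show "\<forall>b::nat\<Rightarrow>nat. (\<forall>j. b j \<le> 1) \<longrightarrow> mu - lowr X b \<in> dominant X \<longrightarrow> lowr X b = 0"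
  proof (intro allI impI)
    fix b :: "nat \<Rightarrow> nat" assume hb: "\<forall>j. b j \<le> 1" and hd: "mu - lowr X b \<in> dominant X"
    have "wle X nu (la + (mu - lowr X b))" using wle_lower[OF eq hb] by (simp add: algebra_simps)
    then have "mu - lowr X b = mu" using mn hd dl wle_sub wle_refl by blast
    then show "lowr X b = 0" by simp
  qed
qed
lemma weight_bound:
  fixes la :: "nat \<Rightarrow> int"
  assumes dom: "la \<in> dominant X"
    and P: "\<forall>b::nat\<Rightarrow>nat. (\<forall>j. b j \<le> 1) \<longrightarrow> la - lowr X b \<in> dominant X \<longrightarrow> lowr X b = 0"
    and A: "A \<subseteq> nodes X" and c: "\<forall>i\<in>A. \<forall>j\<in>A. (i, j) \<in> (RR X)\<^sup>*"
  shows "sum la A \<le> 1"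
proof (rule sum_le_one)
  show "finite A" using A finite_nodes finite_subset by blast
  show "\<forall>i\<in>A. 0 \<le> la i \<and> la i \<le> 1"
    using A dom single_bound[OF dom P] unfolding dominant_def by auto
  show "\<forall>i\<in>A. \<forall>j\<in>A. i \<noteq> j \<longrightarrow> \<not> (la i \<ge> 1 \<and> la j \<ge> 1)"
    using walk_contra[OF dom P] c by blast
qed

lemma set_bound:
  assumes lt: "low_triple X la mu nu" and A: "A \<subseteq> nodes X"
    and c: "\<forall>i\<in>A. \<forall>j\<in>A. (i, j) \<in> (RR X)\<^sup>*"
  shows "(\<Sum>i\<in>{i \<in> A. (la + mu - nu) i > 0}. (la + mu - nu) i) \<le> 2"
proof -
  let ?B = "{i \<in> A. (la + mu - nu) i > 0}"
  have B: "?B \<subseteq> nodes X" using A by auto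
  have cB: "\<forall>i\<in>?B. \<forall>j\<in>?B. (i, j) \<in> (RR X)\<^sup>*" using c by auto
  have dl: "la \<in> dominant X" and dm: "mu \<in> dominant X" and dn: "nu \<in> dominant X"
    using lt unfolding low_triple_def by auto
  have "(\<Sum>i\<in>?B. (la + mu - nu) i) \<le> (\<Sum>i\<in>?B. la i + mu i)"
    using dn B unfolding dominant_def by (intro sum_mono) auto
  also have "\<dots> = sum la ?B + sum mu ?B" by (simp add: sum.distrib)
  also have "\<dots> \<le> 1 + 1"
    using weight_bound[OF dl low_P(1)[OF lt] B cB] weight_bound[OF dm low_P(2)[OF lt] B cB] by simp
  finally show ?thesis by simp
qed

theorem mainTheorem14:
  fixes X :: cartan_type and la mu nu :: "nat \<Rightarrow> int"
  assumes "valid_type X"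
    and "low_triple X la mu nu"
  shows "ht0plus X (la + mu - nu) \<le> 2"
proof (cases "X = TF4")
  case True
  have n: "nodes X = {1..4}" using True unfolding nodes_def rank_def by simp
  have e12: "(1, 2) \<in> (RR X)\<^sup>*" "(2, 1) \<in> (RR X)\<^sup>*"
    using F_12 se_sym[of TF4 1 2] True by (auto intro: r_into_rtrancl)
  have e34: "(3, 4) \<in> (RR X)\<^sup>*" "(4, 3) \<in> (RR X)\<^sup>*"
    using F_34 se_sym[of TF4 3 4] True by (auto intro: r_into_rtrancl)
  have c12: "\<forall>i\<in>{1,2::nat}. \<forall>j\<in>{1,2}. (i, j) \<in> (RR X)\<^sup>*"
    using e12 by (simp only: ball_simps rtrancl.rtrancl_refl simp_thms)
  have c34: "\<forall>i\<in>{3,4::nat}. \<forall>j\<in>{3,4}. (i, j) \<in> (RR X)\<^sup>*"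
    using e34 by (simp only: ball_simps rtrancl.rtrancl_refl simp_thms)
  have "{1,2::nat} \<subseteq> nodes X" "{3,4::nat} \<subseteq> nodes X" using n by auto
  then show ?thesis unfolding ht0plus_def
    using set_bound[OF assms(2) _ c12] set_bound[OF assms(2) _ c34] True by simp
next
  case False
  have A: "I0 X \<subseteq> nodes X" unfolding I0_def by auto
  have c: "\<forall>i\<in>I0 X. \<forall>j\<in>I0 X. (i, j) \<in> (RR X)\<^sup>*"
  proof (intro ballI)
    fix i j assume "i \<in> I0 X" "j \<in> I0 X"
    then have "(1, i) \<in> (RR X)\<^sup>*" "(1, j) \<in> (RR X)\<^sup>*" unfolding I0_def by auto
    then show "(i, j) \<in> (RR X)\<^sup>*" using RR_sym rtrancl_trans by metis
  qed
  show ?thesis unfolding ht0plus_def using set_bound[OF assms(2) A c] False by simp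
qed

end
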